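(* Let $n\ge 3$ be an integer, $t\in(0,1)$, and let $l$ range over non-negative integers. (1) For $0<\alpha<n$, the quantity $\frac{\Gamma(l+\frac{n-\alpha}2)^2}{\Gamma(l+\frac n2)^2}F\big(l+\frac{n+\alpha}2-1,\frac\alpha2;l+\frac n2;t\big)^2$ is strictly decreasing in $l$. (2) For $\alpha\le0$, the quantity $\frac{\Gamma(l+\frac{n-\alpha}2)^2}{\Gamma(l+\frac n2)^2}t^l F\big(l+\frac{n+\alpha}2-1,\frac\alpha2;l+\frac n2;t\big)^2$ is strictly decreasing in $l$.
   Context: $F(a,b;c;z)=\sum_{r\ge0}\frac{(a)_r(b)_r}{(c)_r}\frac{z^r}{r!}$ for $|z|<1$ is the Gauss hypergeometric function, where $(a)_0=1$ and $(a)_r=a(a+1)\cdots(a+r-1)$. *)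

theory Defs
  imports "HOL-Analysis.Analysis"
begin

definition hyp2F1 :: "real \<Rightarrow> real \<Rightarrow> real \<Rightarrow> real \<Rightarrow> real" where
  "hyp2F1 a b c z =
     (\<Sum>r. pochhammer a r * pochhammer b r / pochhammer c r * z ^ r / fact r)"

end

theory Submission
  imports Defs "HOL-Computational_Algebra.Formal_Power_Series" "HOL-Real_Asymp.Real_Asymp"
begin

no_notation vec_nth (infixl \<open>$\<close> 90)
notation fps_nth (infixl \<open>$\<close> 75)


definition hc :: "real \<Rightarrow> real \<Rightarrow> real \<Rightarrow> nat \<Rightarrow> real" where
  "hc a b c r = pochhammer a r * pochhammer b r / (pochhammer c r * fact r)"

lemma hyp2F1_hc: "hyp2F1 a b c z = (\<Sum>r. hc a b c r * z ^ r)"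
  unfolding hyp2F1_def hc_def by (simp add: divide_divide_eq_left mult.commute mult.left_commute)

lemma hc_0 [simp]: "hc a b c 0 = 1"
  by (simp add: hc_def)

lemma hc_Suc:
  assumes "c > 0"
  shows "hc a b c (Suc r) = hc a b c r * ((a + real r) * (b + real r) / ((c + real r) * (real r + 1)))"
proof -
  have "pochhammer c r > 0" using assms by (rule pochhammer_pos)
  moreover have "c + r > 0" using assms by simp
  ultimately show ?thesis
    unfolding hc_def by (simp add: pochhammer_Suc field_simps)
qed

lemma poch_nonneg: "(x::real) \<ge> 0 \<Longrightarrow> pochhammer x n \<ge> 0"
  by (induction n) (auto simp: pochhammer_Suc)

lemma hc_nonneg:
  assumes "a \<ge> 0" "b \<ge> 0" "c > 0"
  shows "hc a b c r \<ge> 0"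
proof -
  have "pochhammer a r \<ge> 0" "pochhammer b r \<ge> 0" "pochhammer c r > 0"
    using assms by (auto intro: poch_nonneg pochhammer_pos)
  thus ?thesis unfolding hc_def by (simp add: divide_nonneg_pos)
qed

lemma hc_summable:
  assumes "c > 0" "\<bar>z\<bar> < 1"
  shows "summable (\<lambda>r. norm (hc a b c r * z ^ r))"
proof -
  define K :: real where "K = 2 / (1 + \<bar>z\<bar>)"
  have K1: "1 < K" using assms by (simp add: K_def field_simps)
  have lim: "(\<lambda>r. (a + real r) * (b + real r) / ((c + real r) * (real r + 1))) \<longlonglongrightarrow> 1"
    by real_asymp
  hence "(\<lambda>r. \<bar>(a + real r) * (b + real r) / ((c + real r) * (real r + 1))\<bar>) \<longlonglongrightarrow> \<bar>1\<bar>"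
    by (rule tendsto_rabs)
  hence "eventually (\<lambda>r. \<bar>(a + real r) * (b + real r) / ((c + real r) * (real r + 1))\<bar> < K) sequentially"
    using K1 by (intro order_tendstoD(2)) auto
  then obtain N where N: "\<And>r. r \<ge> N \<Longrightarrow> \<bar>(a + real r) * (b + real r) / ((c + real r) * (real r + 1))\<bar> < K"
    by (auto simp: eventually_sequentially)
  have q1: "K * \<bar>z\<bar> < 1" using assms by (simp add: K_def field_simps)
  show ?thesis
  proof (rule summable_ratio_test[where c = "K * \<bar>z\<bar>" and N = N])
    show "K * \<bar>z\<bar> < 1" by (fact q1)
  next
    fix r assume "r \<ge> N"
    have "norm (norm (hc a b c (Suc r) * z ^ Suc r))
        = \<bar>(a + real r) * (b + real r) / ((c + real r) * (real r + 1))\<bar> * \<bar>z\<bar> * \<bar>hc a b c r * z ^ r\<bar>"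
    proof -
      have "hc a b c (Suc r) * z ^ Suc r = ((a + real r) * (b + real r) / ((c + real r) * (real r + 1))) * z * (hc a b c r * z ^ r)"
        using assms(1) by (simp add: hc_Suc power_Suc field_simps)
      thus ?thesis by (simp only: real_norm_def abs_abs abs_mult)
    qed
    also have "\<dots> \<le> K * \<bar>z\<bar> * \<bar>hc a b c r * z ^ r\<bar>"
      using N[OF \<open>r \<ge> N\<close>] by (intro mult_right_mono) (auto intro: mult_right_mono)
    finally show "norm (norm (hc a b c (Suc r) * z ^ Suc r)) \<le> K * \<bar>z\<bar> * norm (norm (hc a b c r * z ^ r))"
      by simp
  qed
qed

lemma hyp2F1_pos:
  assumes "a \<ge> 0" "b \<ge> 0" "c > 0" "0 \<le> z" "z < 1"
  shows "hyp2F1 a b c z > 0"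
proof -
  have s: "summable (\<lambda>r. hc a b c r * z ^ r)"
    using hc_summable[of c z a b] assms by (simp add: summable_norm_cancel)
  have "sum (\<lambda>r. hc a b c r * z ^ r) {..<1} \<le> (\<Sum>r. hc a b c r * z ^ r)"
    using s assms by (intro sum_le_suminf) (auto intro!: mult_nonneg_nonneg hc_nonneg)
  thus ?thesis by (simp add: hyp2F1_hc)
qed


section \<open>Evaluation of power series\<close>

definition ev :: "real fps \<Rightarrow> real \<Rightarrow> real" where
  "ev f t = (\<Sum>n. f $ n * t ^ n)"

definition acv :: "real fps \<Rightarrow> real \<Rightarrow> bool" where
  "acv f t \<longleftrightarrow> summable (\<lambda>n. norm (f $ n * t ^ n))"

lemma acv_summable: "acv f t \<Longrightarrow> summable (\<lambda>n. f $ n * t ^ n)"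
  unfolding acv_def by (rule summable_norm_cancel)

lemma ev_add: "acv f t \<Longrightarrow> acv g t \<Longrightarrow> ev (f + g) t = ev f t + ev g t"
  unfolding ev_def using acv_summable[of f t] acv_summable[of g t]
  by (simp add: distrib_right suminf_add)

lemma ev_diff: "acv f t \<Longrightarrow> acv g t \<Longrightarrow> ev (f - g) t = ev f t - ev g t"
  unfolding ev_def using acv_summable[of f t] acv_summable[of g t]
  by (simp add: left_diff_distrib suminf_diff)

lemma ev_cmult: "acv f t \<Longrightarrow> ev (fps_const c * f) t = c * ev f t"
  unfolding ev_def using acv_summable[of f t]
  by (simp add: suminf_mult[symmetric] mult.assoc)

lemma acv_cmult: "acv f t \<Longrightarrow> acv (fps_const c * f) t"
  unfolding acv_def
  by (simp add: abs_mult mult.assoc summable_mult)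

lemma ev_mult_acv:
  assumes f: "acv f t" and g: "acv g t"
  shows "ev (f * g) t = ev f t * ev g t" "acv (f * g) t"
proof -
  define A where "A = (\<lambda>n. f $ n * t ^ n)"
  define B where "B = (\<lambda>n. g $ n * t ^ n)"
  have sA: "summable (\<lambda>n. norm (A n))" using f by (simp add: acv_def A_def)
  have sB: "summable (\<lambda>n. norm (B n))" using g by (simp add: acv_def B_def)
  have eq: "(f * g) $ k * t ^ k = (\<Sum>i\<le>k. A i * B (k - i))" for k
  proof -
    have "(f * g) $ k * t ^ k = (\<Sum>i=0..k. f $ i * g $ (k - i) * t ^ k)"
      by (simp add: fps_mult_nth sum_distrib_right)
    also have "\<dots> = (\<Sum>i\<le>k. A i * B (k - i))"
      unfolding A_def B_def atLeast0AtMost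
    proof (rule sum.cong)
      fix i assume "i \<in> {..k}"
      hence "t ^ k = t ^ i * t ^ (k - i)" by (simp add: power_add[symmetric])
      thus "f $ i * g $ (k - i) * t ^ k = f $ i * t ^ i * (g $ (k - i) * t ^ (k - i))"
        by (simp add: algebra_simps)
    qed simp
    finally show ?thesis .
  qed
  have "(\<lambda>k. \<Sum>i\<le>k. A i * B (k - i)) sums (suminf A * suminf B)"
    by (rule Cauchy_product_sums[OF sA sB])
  hence "(\<lambda>k. (f * g) $ k * t ^ k) sums (ev f t * ev g t)"
    unfolding eq ev_def A_def B_def .
  thus "ev (f * g) t = ev f t * ev g t"
    unfolding ev_def by (rule sums_unique[symmetric])
  have s2: "summable (\<lambda>k. \<Sum>i\<le>k. norm (A i) * norm (B (k - i)))"
    using Cauchy_product_sums[of "\<lambda>n. norm (A n)" "\<lambda>n. norm (B n)"] sA sB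
    by (auto simp: sums_iff)
  show "acv (f * g) t"
    unfolding acv_def
  proof (rule summable_comparison_test'[OF s2])
    fix k
    have "norm ((f * g) $ k * t ^ k) = norm (\<Sum>i\<le>k. A i * B (k - i))" by (simp only: eq)
    also have "\<dots> \<le> (\<Sum>i\<le>k. norm (A i * B (k - i)))" by (rule norm_sum)
    finally show "norm (norm ((f * g) $ k * t ^ k)) \<le> (\<Sum>i\<le>k. norm (A i) * norm (B (k - i)))"
      by (simp add: abs_mult)
  qed
qed

lemma one_minus_X_nth: "(1 - fps_X :: real fps) $ n = (if n = 0 then 1 else if n = 1 then -1 else 0)"
  by (simp add: fps_X_def)

lemma ev_1mX: "ev (1 - fps_X) t = 1 - t" and acv_1mX: "acv (1 - fps_X) t"
proof -
  have "(\<lambda>n. (1 - fps_X :: real fps) $ n * t ^ n) sums (\<Sum>n\<in>{0,1}. (1 - fps_X :: real fps) $ n * t ^ n)"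
    by (rule sums_finite) (auto simp: one_minus_X_nth)
  thus "ev (1 - fps_X) t = 1 - t" unfolding ev_def by (simp add: sums_iff one_minus_X_nth)
  have "summable (\<lambda>n. norm ((1 - fps_X :: real fps) $ n * t ^ n))"
    by (rule summable_finite[of "{0,1}"]) (auto simp: one_minus_X_nth)
  thus "acv (1 - fps_X) t" unfolding acv_def .
qed

definition hfps :: "real \<Rightarrow> real \<Rightarrow> real \<Rightarrow> real fps" where
  "hfps a b c = Abs_fps (hc a b c)"

lemma hfps_nth [simp]: "hfps a b c $ n = hc a b c n"
  by (simp add: hfps_def)

lemma hfps_acv: "c > 0 \<Longrightarrow> \<bar>t\<bar> < 1 \<Longrightarrow> acv (hfps a b c) t"
  unfolding acv_def using hc_summable by simp

lemma hfps_ev: "ev (hfps a b c) t = hyp2F1 a b c t"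
  by (simp add: ev_def hyp2F1_hc)


section \<open>Hypergeometric differential equation and Euler's transformation\<close>

lemma alg_cert:
  fixes X W Wa Wb E Ea Eb a b c :: "'a::comm_ring_1"
  shows "(1-X) * ((Wb*E + 2*Wa*Ea + W*Eb) + (c - 1) * (Wa*E + W*Ea)
          - X * ((Wb*E + 2*Wa*Ea + W*Eb) + (a+b)*(Wa*E + W*Ea) + a*b*(W*E)))
   = (1-X)*E*((1 - X) * Wb - (X * Wa - (c-a-b) * X * W - (c-a-b) * X * Wa))
    + (1-X)*W*(Eb + (c - 1) * Ea - X * (Eb + ((c-a)+(c-b)) * Ea + (c-a)*(c-b) * E))
    + (E*X*(1-(c-a-b)) + 2*(1-X)*Ea + (c-1-X*(a+b))*E) * ((1 - X) * Wa + (c-a-b) * X * W)"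
  by (simp add: algebra_simps)

abbreviation "Dx \<equiv> (fps_XD :: real fps \<Rightarrow> real fps)"

lemma Dx_mult: "Dx (f * g) = Dx f * g + f * Dx g"
  by (simp add: fps_XD_def algebra_simps)

definition ODE :: "real \<Rightarrow> real \<Rightarrow> real \<Rightarrow> real fps \<Rightarrow> bool" where
  "ODE a b c E \<longleftrightarrow> Dx (Dx E) + (fps_const c - 1) * Dx E
     = fps_X * (Dx (Dx E) + (fps_const a + fps_const b) * Dx E + fps_const a * fps_const b * E)"

lemma ODE_L_nth:
  "(Dx (Dx E) + (fps_const c - 1) * Dx E) $ n = real n * (real n + c - 1) * E $ n"
  by (simp add: left_diff_distrib algebra_simps)

lemma ODE_M_nth:
  "(Dx (Dx E) + (fps_const a + fps_const b) * Dx E + fps_const a * fps_const b * E) $ n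
     = (real n + a) * (real n + b) * E $ n"
  by (simp add: distrib_right algebra_simps)

lemma ODE_nth:
  "ODE a b c E \<longleftrightarrow> (\<forall>m. (real m + 1) * (c + real m) * E $ Suc m = (a + real m) * (b + real m) * E $ m)"
proof -
  have "ODE a b c E \<longleftrightarrow> (\<forall>n. real n * (real n + c - 1) * E $ n
     = (if n = 0 then 0 else (real (n - 1) + a) * (real (n - 1) + b) * E $ (n - 1)))"
    unfolding ODE_def fps_eq_iff ODE_L_nth fps_X_mult_nth ODE_M_nth ..
  also have "\<dots> \<longleftrightarrow> (\<forall>m. real (Suc m) * (real (Suc m) + c - 1) * E $ Suc m
       = (real m + a) * (real m + b) * E $ m)"
  proof
    assume H: "\<forall>n. real n * (real n + c - 1) * E $ n
     = (if n = 0 then 0 else (real (n - 1) + a) * (real (n - 1) + b) * E $ (n - 1))"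
    show "\<forall>m. real (Suc m) * (real (Suc m) + c - 1) * E $ Suc m = (real m + a) * (real m + b) * E $ m"
    proof
      fix m show "real (Suc m) * (real (Suc m) + c - 1) * E $ Suc m = (real m + a) * (real m + b) * E $ m"
        using H[rule_format, of "Suc m"] by simp
    qed
  next
    assume H: "\<forall>m. real (Suc m) * (real (Suc m) + c - 1) * E $ Suc m = (real m + a) * (real m + b) * E $ m"
    show "\<forall>n. real n * (real n + c - 1) * E $ n
     = (if n = 0 then 0 else (real (n - 1) + a) * (real (n - 1) + b) * E $ (n - 1))"
    proof
      fix n show "real n * (real n + c - 1) * E $ n
       = (if n = 0 then 0 else (real (n - 1) + a) * (real (n - 1) + b) * E $ (n - 1))"
        using H by (cases n) auto
    qed
  qed
  also have "\<dots> \<longleftrightarrow> (\<forall>m. (real m + 1) * (c + real m) * E $ Suc m = (a + real m) * (b + real m) * E $ m)"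
    by (simp add: algebra_simps)
  finally show ?thesis .
qed

lemma cancel_aux: "(d::real) \<noteq> 0 \<Longrightarrow> d * (h * (y / d)) = y * h"
  by simp

lemma hc_Suc':
  assumes "c > 0"
  shows "(real m + 1) * (c + real m) * hc a b c (Suc m) = (a + real m) * (b + real m) * hc a b c m"
proof -
  have d: "(c + real m) * (real m + 1) \<noteq> 0" using assms by simp
  have e: "hc a b c (Suc m) = hc a b c m * ((a + real m) * (b + real m) / ((c + real m) * (real m + 1)))"
    by (rule hc_Suc[OF assms])
  have "(real m + 1) * (c + real m) * hc a b c (Suc m)
      = ((c + real m) * (real m + 1)) * (hc a b c m * ((a + real m) * (b + real m) / ((c + real m) * (real m + 1))))"
    by (simp only: e mult.commute[of "real m + 1" "c + real m"])
  also have "\<dots> = (a + real m) * (b + real m) * hc a b c m"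
    by (rule cancel_aux[OF d])
  finally show ?thesis .
qed

lemma hfps_ODE: "c > 0 \<Longrightarrow> ODE a b c (hfps a b c)"
  unfolding ODE_nth using hc_Suc' by simp

lemma ODE_unique:
  assumes "c > 0" "ODE a b c P" "P $ 0 = 1"
  shows "P = hfps a b c"
proof -
  have rec: "(real m + 1) * (c + real m) * P $ Suc m = (a + real m) * (b + real m) * P $ m" for m
    using assms(2) unfolding ODE_nth by blast
  have "P $ n = hc a b c n" for n
  proof (induction n)
    case 0 thus ?case using assms(3) by simp
  next
    case (Suc m)
    have "(real m + 1) * (c + real m) * P $ Suc m = (real m + 1) * (c + real m) * hc a b c (Suc m)"
      using rec[of m] hc_Suc'[OF assms(1), of m a b] Suc by simp
    moreover have "(real m + 1) * (c + real m) \<noteq> 0" using assms(1) by simp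
    ultimately show ?case by simp
  qed
  thus ?thesis by (simp add: fps_eq_iff)
qed

lemma aux_cancel2: "(d::real) \<noteq> 0 \<Longrightarrow> e \<noteq> 0 \<Longrightarrow> x * d / (d * e) = x / e"
  by simp

lemma hcW: "(real m + 1) * hc (-g) 1 1 (Suc m) = (real m - g) * hc (-g) 1 1 m"
proof -
  have e: "hc (-g) 1 1 (Suc m) = hc (-g) 1 1 m * ((-g + real m) * (1 + real m) / ((1 + real m) * (real m + 1)))"
    by (rule hc_Suc) simp
  have nz: "real m + 1 \<noteq> 0" "1 + real m \<noteq> 0" by simp_all
  have q: "(-g + real m) * (1 + real m) / ((1 + real m) * (real m + 1)) = (real m - g) / (real m + 1)"
    using aux_cancel2[OF nz(2) nz(1), of "-g + real m"] by simp
  show ?thesis unfolding e q by (rule cancel_aux[OF nz(1)])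
qed

lemma W_rel1:
  "(1 - fps_X) * Dx (hfps (-g) 1 1) + fps_const g * fps_X * hfps (-g) 1 1 = 0"
proof -
  have "((1 - fps_X) * Dx (hfps (-g) 1 1) + fps_const g * fps_X * hfps (-g) 1 1) $ n = 0" for n
  proof (cases n)
    case 0 thus ?thesis by (simp add: ring_distribs)
  next
    case (Suc m)
    have h: "real m * hc (-g) 1 1 (Suc m) + hc (-g) 1 1 (Suc m) = real m * hc (-g) 1 1 m - g * hc (-g) 1 1 m"
      using hcW[of m g] by (simp add: algebra_simps)
    show ?thesis using Suc h by (simp add: ring_distribs algebra_simps)
  qed
  thus ?thesis by (simp add: fps_eq_iff)
qed

lemma W_rel2:
  "(1 - fps_X) * Dx (Dx (hfps (-g) 1 1)) - (fps_X * Dx (hfps (-g) 1 1)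
     - fps_const g * fps_X * hfps (-g) 1 1 - fps_const g * fps_X * Dx (hfps (-g) 1 1)) = 0"
proof -
  have "((1 - fps_X) * Dx (Dx (hfps (-g) 1 1)) - (fps_X * Dx (hfps (-g) 1 1)
     - fps_const g * fps_X * hfps (-g) 1 1 - fps_const g * fps_X * Dx (hfps (-g) 1 1))) $ n = 0" for n
  proof (cases n)
    case 0 thus ?thesis by (simp add: ring_distribs)
  next
    case (Suc m)
    have h: "real m * hc (-g) 1 1 (Suc m) + hc (-g) 1 1 (Suc m) = real m * hc (-g) 1 1 m - g * hc (-g) 1 1 m"
      using hcW[of m g] by (simp add: algebra_simps)
    have h2: "real m * (real m * hc (-g) 1 1 (Suc m) + hc (-g) 1 1 (Suc m)) = real m * (real m * hc (-g) 1 1 m - g * hc (-g) 1 1 m)"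
      using h by simp
    show ?thesis using Suc h h2 by (simp add: ring_distribs algebra_simps, linarith?)
  qed
  thus ?thesis by (simp add: fps_eq_iff)
qed

lemma euler_fps:
  assumes "c > 0"
  shows "hfps a b c = hfps (-(c-a-b)) 1 1 * hfps (c-a) (c-b) c"
proof -
  define W where "W = hfps (-(c-a-b)) 1 1"
  define E where "E = hfps (c-a) (c-b) c"
  define X :: "real fps" where "X = fps_X"
  define A where "A = fps_const a"
  define B where "B = fps_const b"
  define C where "C = fps_const c"
  have cabc: "fps_const (c - a - b) = C - A - B" "fps_const (c - a) = C - A" "fps_const (c - b) = C - B"
    by (simp_all add: A_def B_def C_def)
  have z1: "(1 - X) * Dx W + (C - A - B) * X * W = 0"
    using W_rel1[of "c-a-b", folded W_def X_def, unfolded cabc(1)] .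
  have z2: "(1 - X) * Dx (Dx W) - (X * Dx W - (C - A - B) * X * W - (C - A - B) * X * Dx W) = 0"
    using W_rel2[of "c-a-b", folded W_def X_def, unfolded cabc(1)] .
  have e3: "Dx (Dx E) + (C - 1) * Dx E = X * (Dx (Dx E) + ((C - A) + (C - B)) * Dx E + (C - A) * (C - B) * E)"
    using hfps_ODE[OF assms, of "c-a" "c-b", unfolded ODE_def, folded E_def X_def C_def, unfolded cabc(2,3)] .
  have z3: "Dx (Dx E) + (C - 1) * Dx E - X * (Dx (Dx E) + ((C - A) + (C - B)) * Dx E + (C - A) * (C - B) * E) = 0"
    using e3 by (simp only: right_minus_eq)
  have d1: "Dx (W * E) = Dx W * E + W * Dx E" by (rule Dx_mult)
  have d2: "Dx (Dx (W * E)) = Dx (Dx W) * E + 2 * Dx W * Dx E + W * Dx (Dx E)"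
    by (simp add: Dx_mult algebra_simps mult_2)
  define R where "R = (Dx (Dx (W*E))) + (C - 1) * Dx (W*E)
      - X * (Dx (Dx (W*E)) + (A + B) * Dx (W*E) + A * B * (W*E))"
  note cert = alg_cert[where X=X and W=W and Wa="Dx W" and Wb="Dx (Dx W)" and E=E and Ea="Dx E" and Eb="Dx (Dx E)"
          and a=A and b=B and c=C]
  have "(1 - X) * R = 0"
    unfolding R_def unfolding d2 unfolding d1 unfolding cert unfolding z1 z2 z3 by simp
  moreover have "(1 - X) \<noteq> 0"
  proof
    assume "1 - X = 0"
    hence "(1 - X) $ 0 = 0" by simp
    thus False by (simp add: X_def)
  qed
  ultimately have "R = 0" using mult_eq_0_iff by blast
  hence "ODE a b c (W * E)"
    unfolding ODE_def R_def X_def[symmetric] A_def[symmetric] B_def[symmetric] C_def[symmetric]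
    by (simp only: right_minus_eq)
  moreover have "(W * E) $ 0 = 1" by (simp add: W_def E_def)
  ultimately show ?thesis using ODE_unique[OF assms] unfolding W_def E_def by metis
qed

lemma binom_hyp:
  assumes "\<bar>t\<bar> < 1"
  shows "hyp2F1 (-g) 1 1 t = (1 - t) powr g"
proof -
  have "(\<lambda>n. (g gchoose n) * (-t) ^ n) sums (1 + - t) powr g"
    using assms by (intro gen_binomial_real) simp
  moreover have "(g gchoose n) * (-t) ^ n = hc (-g) 1 1 n * t ^ n" for n
  proof -
    have h1: "hc (-g) 1 1 n = pochhammer (-g) n / fact n"
      unfolding hc_def pochhammer_fact[symmetric] by simp
    have m1: "((-1::real) ^ n * (-1) ^ n) = 1"
      by (rule minus_one_mult_self)
    have "(g gchoose n) * (-t) ^ n = ((-1::real) ^ n * (-1) ^ n) * (pochhammer (-g) n / fact n) * t ^ n"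
      unfolding gbinomial_pochhammer power_minus[of t n] by (simp add: mult_ac)
    thus ?thesis unfolding m1 h1 by simp
  qed
  ultimately show ?thesis by (simp add: hyp2F1_hc sums_iff)
qed

lemma euler:
  assumes "c > 0" "\<bar>t\<bar> < 1"
  shows "hyp2F1 a b c t = (1 - t) powr (c - a - b) * hyp2F1 (c - a) (c - b) c t"
proof -
  have e: "hfps a b c = hfps (-(c-a-b)) 1 1 * hfps (c-a) (c-b) c"
    by (rule euler_fps[OF assms(1)])
  have "hyp2F1 a b c t = ev (hfps (-(c-a-b)) 1 1 * hfps (c-a) (c-b) c) t"
    using hfps_ev[of a b c t] e by simp
  also have "\<dots> = hyp2F1 (-(c-a-b)) 1 1 t * hyp2F1 (c - a) (c - b) c t"
    using assms by (simp add: ev_mult_acv hfps_acv hfps_ev)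
  also have "hyp2F1 (-(c-a-b)) 1 1 t = (1 - t) powr (c - a - b)"
    using assms(2) by (rule binom_hyp)
  finally show ?thesis .
qed


section \<open>Contiguous relation\<close>

lemma contig_field:
  fixes a b c x P Bq Cq f y z :: real
  assumes nz: "Cq \<noteq> 0" "f \<noteq> 0" "c \<noteq> 0" "y \<noteq> 0" "z \<noteq> 0" and y: "y = c + 1 + x" and z: "z = x + 1"
  shows "c * (a * P * (b * Bq) / (c * Cq * (z * f)))
       - (c - b) * (P * (a + 1 + x) * (b * Bq) / (Cq * y * (z * f)))
       = b * (P * (a + 1 + x) * (Bq * (b + 1 + x)) / (Cq * y * (z * f)) - P * Bq / (Cq * f))"
proof -
  define D where "D = Cq * y * (z * f)"
  have e1: "c * (a * P * (b * Bq) / (c * Cq * (z * f))) = a * P * (b * Bq) * y / D"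
    using nz unfolding D_def by (simp add: field_simps)
  have e2: "P * Bq / (Cq * f) = P * Bq * (y * z) / D"
    using nz unfolding D_def by (simp add: field_simps)
  have e3: "a * P * (b * Bq) * y - (c - b) * (P * (a + 1 + x) * (b * Bq))
     = b * (P * (a + 1 + x) * (Bq * (b + 1 + x)) - P * Bq * (y * z))"
    unfolding y z by (simp add: algebra_simps)
  have "c * (a * P * (b * Bq) / (c * Cq * (z * f)))
       - (c - b) * (P * (a + 1 + x) * (b * Bq) / D)
      = (a * P * (b * Bq) * y - (c - b) * (P * (a + 1 + x) * (b * Bq))) / D"
    unfolding e1 by (simp only: times_divide_eq_right diff_divide_distrib)
  also have "\<dots> = b * (P * (a + 1 + x) * (Bq * (b + 1 + x)) - P * Bq * (y * z)) / D"
    unfolding e3 ..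
  also have "\<dots> = b * (P * (a + 1 + x) * (Bq * (b + 1 + x)) / D - P * Bq / (Cq * f))"
    unfolding e2 by (simp only: diff_divide_distrib[symmetric] times_divide_eq_right)
  finally show ?thesis unfolding D_def .
qed
lemma contig_fps:
  assumes "c > 0"
  shows "fps_const c * hfps a b c - fps_const (c - b) * hfps (a + 1) b (c + 1)
       = fps_const b * ((1 - fps_X) * hfps (a + 1) (b + 1) (c + 1))"
proof -
  have "(fps_const c * hfps a b c - fps_const (c - b) * hfps (a + 1) b (c + 1)) $ n
       = (fps_const b * ((1 - fps_X) * hfps (a + 1) (b + 1) (c + 1))) $ n" for n
  proof (cases n)
    case 0 thus ?thesis by (simp add: ring_distribs)
  next
    case (Suc m)
    define P where "P = pochhammer (a + 1) m"
    define Bq where "Bq = pochhammer (b + 1) m"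
    define Cq where "Cq = pochhammer (c + 1) m"
    define f where "f = (fact m :: real)"
    have p1: "pochhammer a (Suc m) = a * P" "pochhammer b (Suc m) = b * Bq" "pochhammer c (Suc m) = c * Cq"
      by (simp_all add: pochhammer_rec P_def Bq_def Cq_def)
    have p2: "pochhammer (a + 1) (Suc m) = P * (a + 1 + real m)"
      "pochhammer (b + 1) (Suc m) = Bq * (b + 1 + real m)"
      "pochhammer (c + 1) (Suc m) = Cq * (c + 1 + real m)"
      by (simp_all add: pochhammer_Suc P_def Bq_def Cq_def)
    have f1: "(fact (Suc m) :: real) = (real m + 1) * f" by (simp add: f_def)
    have nz: "Cq \<noteq> 0" "f \<noteq> 0" "c \<noteq> 0" "c + 1 + real m \<noteq> 0" "real m + 1 \<noteq> 0"
      using assms pochhammer_pos[of "c + 1" m] by (simp_all add: Cq_def f_def)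
    have L: "(fps_const c * hfps a b c - fps_const (c - b) * hfps (a + 1) b (c + 1)) $ Suc m
        = c * hc a b c (Suc m) - (c - b) * hc (a + 1) b (c + 1) (Suc m)"
      by simp
    have R: "(fps_const b * ((1 - fps_X) * hfps (a + 1) (b + 1) (c + 1))) $ Suc m
        = b * (hc (a + 1) (b + 1) (c + 1) (Suc m) - hc (a + 1) (b + 1) (c + 1) m)"
      by (simp add: ring_distribs)
    have E: "c * hc a b c (Suc m) - (c - b) * hc (a + 1) b (c + 1) (Suc m)
        = b * (hc (a + 1) (b + 1) (c + 1) (Suc m) - hc (a + 1) (b + 1) (c + 1) m)"
      unfolding hc_def p1 p2 f1 P_def[symmetric] Bq_def[symmetric] Cq_def[symmetric] f_def[symmetric]
      by (rule contig_field[where x="real m" and y="c + 1 + real m" and z="real m + 1" and a=a and b=b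
            and c=c and P=P and Bq=Bq and Cq=Cq and f=f, OF nz]) simp_all
    show ?thesis unfolding Suc L R E ..
  qed
  thus ?thesis by (simp add: fps_eq_iff)
qed

lemma contig:
  assumes "c > 0" "\<bar>t\<bar> < 1"
  shows "c * hyp2F1 a b c t - (c - b) * hyp2F1 (a + 1) b (c + 1) t
       = (1 - t) * b * hyp2F1 (a + 1) (b + 1) (c + 1) t"
proof -
  have c1: "c + 1 > 0" using assms by simp
  have "c * hyp2F1 a b c t - (c - b) * hyp2F1 (a + 1) b (c + 1) t
      = ev (fps_const c * hfps a b c - fps_const (c - b) * hfps (a + 1) b (c + 1)) t"
    using assms c1
    by (simp add: ev_diff ev_cmult acv_cmult hfps_acv hfps_ev)
  also have "\<dots> = ev (fps_const b * ((1 - fps_X) * hfps (a + 1) (b + 1) (c + 1))) t"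
    by (simp only: contig_fps[OF assms(1)])
  also have "\<dots> = b * (ev (1 - fps_X) t * ev (hfps (a + 1) (b + 1) (c + 1)) t)"
    using assms c1
    by (simp add: ev_cmult ev_mult_acv acv_1mX hfps_acv del: fps_const_neg)
  also have "\<dots> = (1 - t) * b * hyp2F1 (a + 1) (b + 1) (c + 1) t"
    by (simp add: ev_1mX hfps_ev)
  finally show ?thesis .
qed


lemma pos_not_nonpos_Int: "(x::real) > 0 \<Longrightarrow> x \<notin> \<int>\<^sub>\<le>\<^sub>0"
  using nonpos_Ints_nonpos by fastforce

lemma Gamma_succ: "(x::real) > 0 \<Longrightarrow> Gamma (x + 1) = x * Gamma x"
  by (rule Gamma_plus1[OF pos_not_nonpos_Int])

lemma case1_step:
  assumes b: "b > 0" and cb: "c - b > 0" and a: "c + b - 1 > 0" and t: "0 < t" "t < 1"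
  shows "(Gamma (c + 1 - b) / Gamma (c + 1) * hyp2F1 (c + b) b (c + 1) t)^2
       < (Gamma (c - b) / Gamma c * hyp2F1 (c + b - 1) b c t)^2"
proof -
  have c: "c > 0" using b cb by simp
  have tt: "\<bar>t\<bar> < 1" using t by simp
  have g1: "Gamma (c + 1 - b) = (c - b) * Gamma (c - b)"
    using Gamma_succ[OF cb] by (simp add: algebra_simps)
  have g2: "Gamma (c + 1) = c * Gamma c" using Gamma_succ[OF c] .
  have Gc: "Gamma c > 0" using c by simp
  have Gcb: "Gamma (c - b) > 0" using cb by simp
  define F0 where "F0 = hyp2F1 (c + b - 1) b c t"
  define F1 where "F1 = hyp2F1 (c + b) b (c + 1) t"
  define F3 where "F3 = hyp2F1 (c + b) (b + 1) (c + 1) t"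
  have ct: "c * F0 - (c - b) * F1 = (1 - t) * b * F3"
    using contig[OF c tt, of "c + b - 1" b] unfolding F0_def F1_def F3_def by simp
  have F1p: "F1 > 0" unfolding F1_def using b c a t by (intro hyp2F1_pos) auto
  have F3p: "F3 > 0" unfolding F3_def using b c a t by (intro hyp2F1_pos) auto
  define K where "K = Gamma (c - b) / (c * Gamma c)"
  have Kp: "K > 0" unfolding K_def using Gc Gcb c by simp
  have G1: "Gamma (c + 1 - b) / Gamma (c + 1) * F1 = K * ((c - b) * F1)"
  proof -
    have "c \<noteq> 0" using c by linarith
    moreover have "Gamma c \<noteq> 0" using Gc by linarith
    ultimately
    show ?thesis unfolding g1 g2 K_def by (simp add: field_simps)
  qed
  have G0: "Gamma (c - b) / Gamma c * F0 = K * (c * F0)"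
  proof -
    have "c \<noteq> 0" using c by linarith
    moreover have "Gamma c \<noteq> 0" using Gc by linarith
    ultimately
    show ?thesis unfolding K_def by (simp add: field_simps)
  qed
  have "K * ((c - b) * F1) < K * (c * F0)"
  proof -
    have "(1 - t) * b * F3 > 0" using F3p b t by simp
    hence "(c - b) * F1 < c * F0" using ct by linarith
    thus ?thesis using Kp by simp
  qed
  moreover have "K * ((c - b) * F1) > 0" using Kp cb F1p by simp
  ultimately have "(K * ((c - b) * F1))^2 < (K * (c * F0))^2"
    by (intro power_strict_mono) auto
  thus ?thesis unfolding F0_def[symmetric] F1_def[symmetric] G1 G0 .
qed

lemma amgm_aux:
  fixes x y z :: real
  assumes "0 \<le> x" "0 \<le> y" "z^2 \<le> x * y"
  shows "2 * z \<le> x + y"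
proof (rule power2_le_imp_le)
  have "(x + y)^2 - 4 * (x * y) = (x - y)^2" by (simp add: power2_eq_square algebra_simps)
  moreover have "(x - y)^2 \<ge> 0" by simp
  ultimately have "4 * (x * y) \<le> (x + y)^2" by linarith
  thus "(2 * z)^2 \<le> (x + y)^2" using assms(3) by (simp add: power_mult_distrib)
  show "0 \<le> x + y" using assms by simp
qed

lemma key2:
  assumes be: "\<beta> \<ge> 0" and c: "c \<ge> 1" and t: "0 < t" "t < 1"
  shows "t * ((c + \<beta>) / c * hyp2F1 (\<beta> + 1) (c + \<beta> + 1) (c + 1) t)^2 < (hyp2F1 (\<beta> + 1) (c + \<beta>) c t)^2"
proof -
  have c0: "c > 0" using c by simp
  have tt: "\<bar>t\<bar> < 1" using t by simp
  define bs where "bs = (\<lambda>s. hc (\<beta> + 1) (c + \<beta>) c s)"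
  define as where "as = (\<lambda>s. (c + \<beta>) / c * hc (\<beta> + 1) (c + \<beta> + 1) (c + 1) s)"
  define u where "u = sqrt t"
  have u: "u \<ge> 0" "u^2 = t" using t by (simp_all add: u_def)
  have bs_nn: "bs s \<ge> 0" for s unfolding bs_def using be c0 by (intro hc_nonneg) auto
  have as_eq: "as s = bs s * ((c + \<beta> + real s) / (c + real s))" for s
  proof -
    have pc: "pochhammer c s > 0" using c0 by (rule pochhammer_pos)
    have r1: "(c + \<beta>) * pochhammer (c + \<beta> + 1) s = pochhammer (c + \<beta>) s * (c + \<beta> + real s)"
      using pochhammer_rec[of "c + \<beta>" s] pochhammer_Suc[of "c + \<beta>" s] by simp
    have r2: "c * pochhammer (c + 1) s = pochhammer c s * (c + real s)"
      using pochhammer_rec[of c s] pochhammer_Suc[of c s] by simp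
    have nz: "c \<noteq> 0" "c + real s \<noteq> 0" "pochhammer c s \<noteq> 0" "(fact s :: real) \<noteq> 0"
      using c0 pc by auto
    have "as s = pochhammer (\<beta> + 1) s * ((c + \<beta>) * pochhammer (c + \<beta> + 1) s)
                / ((c * pochhammer (c + 1) s) * fact s)"
      unfolding as_def hc_def using nz by (simp add: field_simps)
    also have "\<dots> = pochhammer (\<beta> + 1) s * (pochhammer (c + \<beta>) s * (c + \<beta> + real s))
                / ((pochhammer c s * (c + real s)) * fact s)"
      unfolding r1 r2 ..
    also have "\<dots> = bs s * ((c + \<beta> + real s) / (c + real s))"
      unfolding bs_def hc_def using nz by (simp add: field_simps)
    finally show ?thesis .
  qed
  have bs_Suc: "bs (Suc s) = bs s * ((\<beta> + 1 + real s) * (c + \<beta> + real s) / ((c + real s) * (real s + 1)))" for s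
    unfolding bs_def by (rule hc_Suc[OF c0])
  have as_nn: "as s \<ge> 0" for s
    unfolding as_eq using bs_nn c0 be by (intro mult_nonneg_nonneg divide_nonneg_nonneg) auto
  have sq: "(as s)^2 \<le> bs s * bs (Suc s)" for s
  proof -
    define \<rho> where "\<rho> = (c + \<beta> + real s) / (c + real s)"
    have \<rho>0: "\<rho> \<ge> 0" unfolding \<rho>_def using c0 be by simp
    have cs: "c + real s > 0" "real s + 1 > 0" using c0 by auto
    have ineq: "\<rho> \<le> (\<beta> + 1 + real s) / (real s + 1)"
      unfolding \<rho>_def using cs
    proof -
      have "(c + \<beta> + real s) * (real s + 1) \<le> (\<beta> + 1 + real s) * (c + real s)"
      proof -
        have "(\<beta> + 1 + real s) * (c + real s) - (c + \<beta> + real s) * (real s + 1) = \<beta> * (c - 1)"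
          by (simp add: algebra_simps)
        moreover have "\<beta> * (c - 1) \<ge> 0" using be c by simp
        ultimately show ?thesis by linarith
      qed
      thus "(c + \<beta> + real s) / (c + real s) \<le> (\<beta> + 1 + real s) / (real s + 1)"
        using cs by (simp add: divide_simps)
    qed
    have "(as s)^2 = (bs s)^2 * (\<rho> * \<rho>)"
      unfolding as_eq \<rho>_def by (simp add: power2_eq_square)
    also have "\<dots> \<le> (bs s)^2 * (\<rho> * ((\<beta> + 1 + real s) / (real s + 1)))"
      using ineq \<rho>0 by (intro mult_left_mono) auto
    also have "\<dots> = bs s * bs (Suc s)"
      unfolding bs_Suc \<rho>_def by (simp add: power2_eq_square field_simps)
    finally show ?thesis .
  qed
  have c1: "c + 1 > 0" using c0 by simp
  have sb: "summable (\<lambda>s. bs s * t^s)"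
    unfolding bs_def by (rule summable_norm_cancel[OF hc_summable[OF c0 tt]])
  have sa0: "summable (\<lambda>s. hc (\<beta> + 1) (c + \<beta> + 1) (c + 1) s * t^s)"
    by (rule summable_norm_cancel[OF hc_summable[OF c1 tt]])
  have sa: "summable (\<lambda>s. as s * t^s)"
    unfolding as_def mult.assoc by (rule summable_mult[OF sa0])
  have S0: "(\<Sum>s. bs s * t^s) = hyp2F1 (\<beta> + 1) (c + \<beta>) c t"
    unfolding bs_def hyp2F1_hc ..
  have S1: "(\<Sum>s. as s * t^s) = (c + \<beta>) / c * hyp2F1 (\<beta> + 1) (c + \<beta> + 1) (c + 1) t"
    unfolding as_def mult.assoc hyp2F1_hc by (rule suminf_mult[OF sa0])
  have trm: "2 * (u * (as s * t^s)) \<le> bs s * t^s + bs (Suc s) * t^(Suc s)" for s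
  proof (rule amgm_aux)
    show "0 \<le> bs s * t^s" "0 \<le> bs (Suc s) * t^(Suc s)" using bs_nn t by auto
    have "(u * (as s * t^s))^2 = t * (as s)^2 * (t^s)^2"
      using u by (simp add: power_mult_distrib)
    also have "\<dots> \<le> t * (bs s * bs (Suc s)) * (t^s)^2"
      using sq[of s] t by (intro mult_right_mono mult_left_mono) auto
    also have "\<dots> = bs s * t^s * (bs (Suc s) * t^(Suc s))"
      by (simp add: power2_eq_square power_Suc algebra_simps)
    finally show "(u * (as s * t^s))^2 \<le> bs s * t^s * (bs (Suc s) * t^(Suc s))" .
  qed
  have sbS: "summable (\<lambda>s. bs (Suc s) * t^(Suc s))"
    using sb by (subst summable_Suc_iff)
  have "(\<Sum>s. 2 * (u * (as s * t^s))) \<le> (\<Sum>s. bs s * t^s + bs (Suc s) * t^(Suc s))"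
    by (intro suminf_le trm summable_mult summable_add sa sb sbS)
  also have "\<dots> = (\<Sum>s. bs s * t^s) + ((\<Sum>s. bs s * t^s) - bs 0 * t^0)"
    using suminf_add[OF sb sbS] suminf_split_head[OF sb] by simp
  also have "bs 0 = 1" by (simp add: bs_def)
  finally have "2 * (u * (\<Sum>s. as s * t^s)) \<le> 2 * (\<Sum>s. bs s * t^s) - 1"
    using suminf_mult[OF sa, of u] suminf_mult[of "\<lambda>s. u * (as s * t^s)" 2] summable_mult[OF sa, of u]
    by simp
  hence lt: "u * (\<Sum>s. as s * t^s) < (\<Sum>s. bs s * t^s)" by simp
  have nn: "0 \<le> u * (\<Sum>s. as s * t^s)"
    using u as_nn t sa by (intro mult_nonneg_nonneg suminf_nonneg) auto
  have "(u * (\<Sum>s. as s * t^s))^2 < (\<Sum>s. bs s * t^s)^2"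
    using lt nn by (intro power_strict_mono) auto
  hence "(u * ((c + \<beta>) / c * hyp2F1 (\<beta> + 1) (c + \<beta> + 1) (c + 1) t))^2 < (hyp2F1 (\<beta> + 1) (c + \<beta>) c t)^2"
    unfolding S0 S1 .
  moreover have fin: "(u * Y)^2 = t * Y^2" for Y using u(2) by (simp add: power_mult_distrib)
  ultimately show ?thesis by (simp only: fin)
qed

lemma aux3: "(t::real) * (p * y)^2 = p^2 * (t * y^2)"
  by (simp add: power_mult_distrib mult_ac)

lemma case2_step:
  assumes be: "\<beta> \<ge> 0" and c: "c \<ge> 1" and t: "0 < t" "t < 1"
  shows "t * (Gamma (c + 1 + \<beta>) / Gamma (c + 1) * hyp2F1 (c - \<beta>) (-\<beta>) (c + 1) t)^2
       < (Gamma (c + \<beta>) / Gamma c * hyp2F1 (c - \<beta> - 1) (-\<beta>) c t)^2"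
proof -
  have c0: "c > 0" using c by simp
  have c1: "c + 1 > 0" using c by simp
  have tt: "\<bar>t\<bar> < 1" using t by simp
  have e0: "hyp2F1 (c - \<beta> - 1) (-\<beta>) c t = (1 - t) powr (c - (c - \<beta> - 1) - - \<beta>) * hyp2F1 (c - (c - \<beta> - 1)) (c - - \<beta>) c t"
    by (rule euler[OF c0 tt])
  have e1: "hyp2F1 (c - \<beta>) (-\<beta>) (c + 1) t = (1 - t) powr (c + 1 - (c - \<beta>) - - \<beta>) * hyp2F1 (c + 1 - (c - \<beta>)) (c + 1 - - \<beta>) (c + 1) t"
    by (rule euler[OF c1 tt])
  have q: "c - (c - \<beta> - 1) - - \<beta> = 1 + 2 * \<beta>" "c - (c - \<beta> - 1) = \<beta> + 1" "c - - \<beta> = c + \<beta>"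
     "c + 1 - (c - \<beta>) - - \<beta> = 1 + 2 * \<beta>" "c + 1 - (c - \<beta>) = \<beta> + 1" "c + 1 - - \<beta> = c + \<beta> + 1"
     "\<beta> + 1 - - \<beta> = 1 + 2 * \<beta>"
    by simp_all
  define E where "E = (1 - t) powr (1 + 2 * \<beta>)"
  have Ep: "E > 0" unfolding E_def using t by simp
  have g1: "Gamma (c + 1 + \<beta>) = (c + \<beta>) * Gamma (c + \<beta>)"
    using Gamma_succ[of "c + \<beta>"] c0 be by (simp add: algebra_simps)
  have g2: "Gamma (c + 1) = c * Gamma c" using Gamma_succ[OF c0] .
  have Gc: "Gamma c > 0" using c0 by simp
  define \<phi> where "\<phi> = Gamma (c + \<beta>) / Gamma c"
  have \<phi>p: "\<phi> > 0" unfolding \<phi>_def using Gc c0 be by simp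
  define H0 where "H0 = hyp2F1 (\<beta> + 1) (c + \<beta>) c t"
  define H1 where "H1 = hyp2F1 (\<beta> + 1) (c + \<beta> + 1) (c + 1) t"
  have L: "Gamma (c + 1 + \<beta>) / Gamma (c + 1) * hyp2F1 (c - \<beta>) (-\<beta>) (c + 1) t = \<phi> * E * ((c + \<beta>) / c * H1)"
    unfolding e1 q g1 g2 \<phi>_def E_def H1_def using c0 Gc by (simp add: field_simps)
  have R: "Gamma (c + \<beta>) / Gamma c * hyp2F1 (c - \<beta> - 1) (-\<beta>) c t = \<phi> * E * H0"
    unfolding e0 q \<phi>_def E_def H0_def by (simp only: mult.assoc)
  have k: "t * ((c + \<beta>) / c * H1)^2 < H0^2"
    unfolding H0_def H1_def by (rule key2[OF be c t])
  have "t * (\<phi> * E * ((c + \<beta>) / c * H1))^2 = (\<phi> * E)^2 * (t * ((c + \<beta>) / c * H1)^2)"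
    by (rule aux3)
  also have "\<dots> < (\<phi> * E)^2 * H0^2"
    using k \<phi>p Ep by (intro mult_strict_left_mono) auto
  also have "\<dots> = (\<phi> * E * H0)^2" by (simp add: power_mult_distrib)
  finally show ?thesis unfolding L R .
qed

lemma dec_chain:
  fixes f :: "nat \<Rightarrow> real"
  assumes "\<And>k. f (Suc k) < f k" "l < m"
  shows "f m < f l"
  using assms(2)
proof (induction m)
  case 0 thus ?case by simp
next
  case (Suc m)
  show ?case
  proof (cases "l = m")
    case True thus ?thesis using assms(1) by simp
  next
    case False
    hence "l < m" using Suc.prems by simp
    thus ?thesis using Suc.IH assms(1)[of m] by simp
  qed
qed


theorem lemma2p5:
  fixes n :: nat and t :: real
  assumes "n \<ge> 3" and "0 < t" and "t < 1"
  shows "(\<forall>\<alpha>::real. 0 < \<alpha> \<and> \<alpha> < real n \<longrightarrow>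
            (\<forall>l m :: nat. l < m \<longrightarrow>
              Gamma (real m + (real n - \<alpha>) / 2) ^ 2 / Gamma (real m + real n / 2) ^ 2
                * hyp2F1 (real m + (real n + \<alpha>) / 2 - 1) (\<alpha> / 2) (real m + real n / 2) t ^ 2
              < Gamma (real l + (real n - \<alpha>) / 2) ^ 2 / Gamma (real l + real n / 2) ^ 2
                * hyp2F1 (real l + (real n + \<alpha>) / 2 - 1) (\<alpha> / 2) (real l + real n / 2) t ^ 2))
       \<and> (\<forall>\<alpha>::real. \<alpha> \<le> 0 \<longrightarrow>
            (\<forall>l m :: nat. l < m \<longrightarrow>
              Gamma (real m + (real n - \<alpha>) / 2) ^ 2 / Gamma (real m + real n / 2) ^ 2
                * t ^ m * hyp2F1 (real m + (real n + \<alpha>) / 2 - 1) (\<alpha> / 2) (real m + real n / 2) t ^ 2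
              < Gamma (real l + (real n - \<alpha>) / 2) ^ 2 / Gamma (real l + real n / 2) ^ 2
                * t ^ l * hyp2F1 (real l + (real n + \<alpha>) / 2 - 1) (\<alpha> / 2) (real l + real n / 2) t ^ 2))"
proof (intro conjI allI impI)
  have n3: "real n \<ge> 3" using assms(1) by simp
  fix \<alpha> :: real and l m :: nat
  assume \<alpha>: "0 < \<alpha> \<and> \<alpha> < real n" and lm: "l < m"
  define f where "f k = Gamma (real k + (real n - \<alpha>) / 2) ^ 2 / Gamma (real k + real n / 2) ^ 2
                * hyp2F1 (real k + (real n + \<alpha>) / 2 - 1) (\<alpha> / 2) (real k + real n / 2) t ^ 2" for k
  have step: "f (Suc k) < f k" for k
  proof -
    define c where "c = real k + real n / 2"
    define b where "b = \<alpha> / 2"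
    have e: "real k + (real n - \<alpha>) / 2 = c - b" "real k + (real n + \<alpha>) / 2 - 1 = c + b - 1"
      "real k + real n / 2 = c"
      "real (Suc k) + (real n - \<alpha>) / 2 = c + 1 - b" "real (Suc k) + (real n + \<alpha>) / 2 - 1 = c + b"
      "real (Suc k) + real n / 2 = c + 1"
      by (simp_all add: c_def b_def field_simps)
    have fk: "f k = (Gamma (c - b) / Gamma c * hyp2F1 (c + b - 1) b c t)^2"
      unfolding f_def e b_def[symmetric] by (simp only: power_mult_distrib power_divide)
    have fS: "f (Suc k) = (Gamma (c + 1 - b) / Gamma (c + 1) * hyp2F1 (c + b) b (c + 1) t)^2"
      unfolding f_def e b_def[symmetric] by (simp only: power_mult_distrib power_divide)
    show ?thesis unfolding fk fS
    proof (rule case1_step)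
      show "b > 0" "c - b > 0" "c + b - 1 > 0" using \<alpha> n3 by (simp_all add: b_def c_def field_simps)
    qed (use assms in auto)
  qed
  show "Gamma (real m + (real n - \<alpha>) / 2) ^ 2 / Gamma (real m + real n / 2) ^ 2
                * hyp2F1 (real m + (real n + \<alpha>) / 2 - 1) (\<alpha> / 2) (real m + real n / 2) t ^ 2
              < Gamma (real l + (real n - \<alpha>) / 2) ^ 2 / Gamma (real l + real n / 2) ^ 2
                * hyp2F1 (real l + (real n + \<alpha>) / 2 - 1) (\<alpha> / 2) (real l + real n / 2) t ^ 2"
    using dec_chain[of f, OF step lm] unfolding f_def .
next
  have n3: "real n \<ge> 3" using assms(1) by simp
  fix \<alpha> :: real and l m :: nat
  assume \<alpha>: "\<alpha> \<le> 0" and lm: "l < m"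
  define f where "f k = Gamma (real k + (real n - \<alpha>) / 2) ^ 2 / Gamma (real k + real n / 2) ^ 2
                * t ^ k * hyp2F1 (real k + (real n + \<alpha>) / 2 - 1) (\<alpha> / 2) (real k + real n / 2) t ^ 2" for k
  have step: "f (Suc k) < f k" for k
  proof -
    define c where "c = real k + real n / 2"
    define \<beta> where "\<beta> = - \<alpha> / 2"
    have e: "real k + (real n - \<alpha>) / 2 = c + \<beta>" "real k + (real n + \<alpha>) / 2 - 1 = c - \<beta> - 1"
      "real k + real n / 2 = c" "\<alpha> / 2 = - \<beta>"
      "real (Suc k) + (real n - \<alpha>) / 2 = c + 1 + \<beta>" "real (Suc k) + (real n + \<alpha>) / 2 - 1 = c - \<beta>"
      "real (Suc k) + real n / 2 = c + 1"
      by (simp_all add: c_def \<beta>_def field_simps)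
    have fk: "f k = t ^ k * (Gamma (c + \<beta>) / Gamma c * hyp2F1 (c - \<beta> - 1) (- \<beta>) c t)^2"
      unfolding f_def e by (simp add: power_mult_distrib power_divide mult_ac)
    have fS: "f (Suc k) = t ^ k * (t * (Gamma (c + 1 + \<beta>) / Gamma (c + 1) * hyp2F1 (c - \<beta>) (- \<beta>) (c + 1) t)^2)"
      unfolding f_def e by (simp add: power_mult_distrib power_divide mult_ac)
    have "t * (Gamma (c + 1 + \<beta>) / Gamma (c + 1) * hyp2F1 (c - \<beta>) (- \<beta>) (c + 1) t)^2
        < (Gamma (c + \<beta>) / Gamma c * hyp2F1 (c - \<beta> - 1) (- \<beta>) c t)^2"
    proof (rule case2_step)
      show "\<beta> \<ge> 0" "c \<ge> 1" using \<alpha> n3 by (simp_all add: \<beta>_def c_def)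
    qed (use assms in auto)
    moreover have "t ^ k > 0" using assms by simp
    ultimately show ?thesis unfolding fk fS by (rule mult_strict_left_mono)
  qed
  show "Gamma (real m + (real n - \<alpha>) / 2) ^ 2 / Gamma (real m + real n / 2) ^ 2
                * t ^ m * hyp2F1 (real m + (real n + \<alpha>) / 2 - 1) (\<alpha> / 2) (real m + real n / 2) t ^ 2
              < Gamma (real l + (real n - \<alpha>) / 2) ^ 2 / Gamma (real l + real n / 2) ^ 2
                * t ^ l * hyp2F1 (real l + (real n + \<alpha>) / 2 - 1) (\<alpha> / 2) (real l + real n / 2) t ^ 2"
    using dec_chain[of f, OF step lm] unfolding f_def .
qed

end
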